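(* Consider the one-dimensional Euler equations with ratio of specific heats $\gamma>1$, conserved variables $u=(\rho,\rho u,\rho e^t)^T$ with $\rho>0$, $p>0$, $\rho e^t = \frac{p}{\gamma-1}+\frac12\rho u^2$, and entropy variables $$v=\Big[\frac{\gamma-S}{\gamma-1}-\frac12\frac{\rho u^2}{p},\ \frac{\rho u}{p},\ -\frac{\rho}{p}\Big]^T,\qquad S=\ln p-\gamma\ln\rho .$$ Given two states (labelled $n$ and $n+1$), set $z_1=\sqrt{\rho/p}$, $z_2=\sqrt{\rho/p}\,u$, $z_3=\sqrt{\rho p}$ for each state, and for a quantity $z$ let $[z]=z^{n+1}-z^{n}$, $\bar z=\frac12(z^n+z^{n+1})$, and $z^{\ln}=[z]/[\ln z]$ (logarithmic mean, with $z^{\ln}=z^n$ when $z^n=z^{n+1}$). Define $u^*=(u_1,u_2,u_3)^T$ by $$u_1=\bar z_1\, z_3^{\ln},\qquad u_2=u_1\frac{\bar z_2}{\bar z_1},\qquad u_3=\frac{1}{2\bar z_1}\Big(-u_1\frac{1+\gamma}{1-\gamma}\frac{1}{z_1^{\ln}}+u_2\bar z_2-\bar z_3\Big).$$ Then $u^*$ satisfies the entropy-conservation condition in time $$[v]\cdot u^* = [\rho],$$ i.e. $(v^{n+1}-v^n)\cdot u^*=\rho^{n+1}-\rho^n$, where $\rho=v\cdot u-U$ is the temporal flux potential for the entropy $U=-\rho S/(\gamma-1)$. Moreover $u^*$ is consistent: if the two states coincide, $u^*$ equals the common conserved state $u$.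
   Context: Here $\rho$ is density, $u$ velocity, $p$ pressure, $e^t$ total energy per unit mass. The entropy function is $U(u)=-\frac{\rho S}{\gamma-1}$, and $v=(\partial U/\partial u)^T$ are the entropy variables given in the claim. A temporal interface flux $u^*$ between time levels $n$ and $n+1$ is called entropy conservative if $[v]\cdot u^*=[\phi]$ with $\phi=v\cdot u-U$; for this entropy $\phi=\rho$. *)

theory Defs
  imports Complex_Main
begin

definition cons_vars :: "real \<Rightarrow> real \<Rightarrow> real \<Rightarrow> real \<Rightarrow> real \<times> real \<times> real" where
  "cons_vars \<gamma> \<rho> u p = (\<rho>, \<rho> * u, p / (\<gamma> - 1) + \<rho> * u\<^sup>2 / 2)"

definition phys_entropy :: "real \<Rightarrow> real \<Rightarrow> real \<Rightarrow> real" where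
  "phys_entropy \<gamma> \<rho> p = ln p - \<gamma> * ln \<rho>"

definition ent_vars :: "real \<Rightarrow> real \<Rightarrow> real \<Rightarrow> real \<Rightarrow> real \<times> real \<times> real" where
  "ent_vars \<gamma> \<rho> u p =
     ((\<gamma> - phys_entropy \<gamma> \<rho> p) / (\<gamma> - 1) - (\<rho> * u\<^sup>2 / p) / 2, \<rho> * u / p, - \<rho> / p)"

definition dot3 :: "real \<times> real \<times> real \<Rightarrow> real \<times> real \<times> real \<Rightarrow> real" where
  "dot3 a b = fst a * fst b + fst (snd a) * fst (snd b) + snd (snd a) * snd (snd b)"

definition diff3 :: "real \<times> real \<times> real \<Rightarrow> real \<times> real \<times> real \<Rightarrow> real \<times> real \<times> real" where
  "diff3 a b = (fst a - fst b, fst (snd a) - fst (snd b), snd (snd a) - snd (snd b))"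

definition zz1 :: "real \<Rightarrow> real \<Rightarrow> real" where "zz1 \<rho> p = sqrt (\<rho> / p)"
definition zz2 :: "real \<Rightarrow> real \<Rightarrow> real \<Rightarrow> real" where "zz2 \<rho> u p = sqrt (\<rho> / p) * u"
definition zz3 :: "real \<Rightarrow> real \<Rightarrow> real" where "zz3 \<rho> p = sqrt (\<rho> * p)"

definition amean :: "real \<Rightarrow> real \<Rightarrow> real" where "amean a b = (a + b) / 2"

definition logmean :: "real \<Rightarrow> real \<Rightarrow> real" where
  "logmean a b = (if a = b then a else (b - a) / (ln b - ln a))"

definition ustar :: "real \<Rightarrow> real \<Rightarrow> real \<Rightarrow> real \<Rightarrow> real \<Rightarrow> real \<Rightarrow> real \<Rightarrow> real \<times> real \<times> real" where
  "ustar \<gamma> r0 v0 p0 r1 v1 p1 =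
    (let z1b = amean (zz1 r0 p0) (zz1 r1 p1);
         z2b = amean (zz2 r0 v0 p0) (zz2 r1 v1 p1);
         z3b = amean (zz3 r0 p0) (zz3 r1 p1);
         z1l = logmean (zz1 r0 p0) (zz1 r1 p1);
         z3l = logmean (zz3 r0 p0) (zz3 r1 p1);
         u1 = z1b * z3l;
         u2 = u1 * z2b / z1b;
         u3 = (1 / (2 * z1b)) * (- u1 * ((1 + \<gamma>) / (1 - \<gamma>)) * (1 / z1l) + u2 * z2b - z3b)
     in (u1, u2, u3))"

end

theory Submission
  imports Defs
begin

lemma logmean_pos: assumes "a > 0" "b > 0" shows "logmean a b > 0"
proof (cases "a = b")
  case False
  then have "ln b \<noteq> ln a" using assms by simp
  moreover have "(b - a) / (ln b - ln a) > 0"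
  proof (cases "a < b")
    case True then show ?thesis using assms by (simp add: divide_pos_pos)
  next
    case f: False then have "b < a" using False by simp
    then show ?thesis using assms by (simp add: divide_neg_neg)
  qed
  ultimately show ?thesis using False by (simp add: logmean_def)
qed (simp add: logmean_def assms)

lemma logmean_prop: assumes "a > 0" "b > 0" shows "logmean a b * (ln b - ln a) = b - a"
  using assms by (auto simp: logmean_def)

lemma repr:
  assumes "r > 0" "p > 0"
  shows "r = zz1 r p * zz3 r p" "p = zz3 r p / zz1 r p" "v = zz2 r v p / zz1 r p"
        "zz1 r p > 0" "zz3 r p > 0"
proof -
  have "zz1 r p * zz3 r p = sqrt (r/p * (r*p))" unfolding zz1_def zz3_def real_sqrt_mult ..
  also have "r/p*(r*p) = r^2" using assms by (simp add: power2_eq_square)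
  finally show "r = zz1 r p * zz3 r p" using assms by simp
  have "zz3 r p / zz1 r p = sqrt ((r*p) / (r/p))" unfolding zz1_def zz3_def real_sqrt_divide ..
  also have "(r*p) / (r/p) = p^2" using assms by (simp add: power2_eq_square)
  finally show "p = zz3 r p / zz1 r p" using assms by simp
  show "zz1 r p > 0" "zz3 r p > 0" using assms by (auto simp: zz1_def zz3_def)
  then show "v = zz2 r v p / zz1 r p" using assms by (simp add: zz1_def zz2_def)
qed

lemma alg0:
  fixes K a0 ab b0 bb c0 cb A C dLa dLc :: real
  assumes "ab \<noteq> 0" "A \<noteq> 0" "C \<noteq> 0"
  shows "((dLc) - K * (dLa) - ((2*bb-b0)*(2*bb-b0) - b0*b0)/2) * (ab * C)
     + ((2*ab-a0)*(2*bb-b0) - a0*b0) * (ab * C * bb / ab)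
     + (- ((2*ab-a0)*(2*ab-a0)) + a0*a0) * ((1 / (2 * ab)) * (- (ab * C) * K * (1 / A)
         + (ab * C * bb / ab) * bb - cb))
     = ab * C * dLc - ab * C * K * dLa + (2*ab-2*a0) * (ab*C*K/A) + (2*ab - 2*a0) * cb"
  using assms by (simp add: field_simps)

lemma alg:
  fixes K a0 a1 b0 b1 c0 c1 A C La0 La1 Lc0 Lc1 :: real
  assumes "a0 + a1 \<noteq> 0" "A \<noteq> 0" "C \<noteq> 0" "A * (La1 - La0) = a1 - a0" "C * (Lc1 - Lc0) = c1 - c0"
  shows "((Lc1 - Lc0) - K * (La1 - La0) - (b1*b1 - b0*b0)/2) * (((a0+a1)/2) * C)
     + (a1*b1 - a0*b0) * (((a0+a1)/2) * C * ((b0+b1)/2) / ((a0+a1)/2))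
     + (- (a1*a1) + a0*a0) * ((1 / (2 * ((a0+a1)/2))) * (- (((a0+a1)/2) * C) * K * (1 / A)
         + (((a0+a1)/2) * C * ((b0+b1)/2) / ((a0+a1)/2)) * ((b0+b1)/2) - (c0+c1)/2))
     = a1*c1 - a0*c0"
proof -
  define ab where "ab = (a0+a1)/2"
  define bb where "bb = (b0+b1)/2"
  define cb where "cb = (c0+c1)/2"
  have e: "a1 = 2*ab - a0" "b1 = 2*bb-b0" "c1 = 2*cb - c0" by (simp_all add: ab_def bb_def cb_def field_simps)
  have h: "ab \<noteq> 0" using assms(1) ab_def by simp
  have key: "ab * C * (Lc1 - Lc0) - ab * C * K * (La1 - La0) + (2*ab-2*a0) * (ab*C*K/A) + (2*ab - 2*a0) * cb = a1*c1 - a0*c0"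
  proof -
    have "C * (Lc1 - Lc0) = 2*cb - 2*c0" using assms(5) e by simp
    then have x1: "ab * C * (Lc1 - Lc0) = ab * (2*cb - 2*c0)" by (metis mult.assoc)
    have x3: "A * (La1 - La0) = 2*ab - 2*a0" using assms(4) e by simp
    have "ab * C * K * (La1 - La0) = ab * C * K * (A * (La1 - La0)) / A" using assms(2) by simp
    then have "ab * C * K * (La1 - La0) = ab * C * K * (2*ab - 2*a0) / A" unfolding x3 .
    note x2 = this
    show ?thesis unfolding x1 x2 e(1,3) using assms(2) by (simp add: field_simps)
  qed
  show ?thesis using key
    unfolding ab_def[symmetric] bb_def[symmetric] cb_def[symmetric]
    unfolding e(1,2) alg0[OF h assms(2,3)] .
qed

lemma main_abc:
  fixes g a0 b0 c0 a1 b1 c1 :: real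
  assumes "g > 1" "a0 > 0" "c0 > 0" "a1 > 0" "c1 > 0"
  shows "dot3 (diff3 (ent_vars g (a1*c1) (b1/a1) (c1/a1)) (ent_vars g (a0*c0) (b0/a0) (c0/a0)))
     (ustar g (a0*c0) (b0/a0) (c0/a0) (a1*c1) (b1/a1) (c1/a1)) = a1*c1 - a0*c0"
proof -
  have z: "zz1 (a*c) (c/a) = a" "zz3 (a*c) (c/a) = c" "zz2 (a*c) (b/a) (c/a) = b"
    if "a > 0" "c > 0" for a b c :: real
  proof -
    have "(a*c)/(c/a) = a^2" "(a*c)*(c/a) = c^2" using that by (auto simp: power2_eq_square)
    then show "zz1 (a*c) (c/a) = a" "zz3 (a*c) (c/a) = c" "zz2 (a*c) (b/a) (c/a) = b"
      using that by (auto simp: zz1_def zz2_def zz3_def)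
  qed
  have l: "ln (a*c) = ln a + ln c" "ln (c/a) = ln c - ln a" if "a > 0" "c > 0" for a c :: real
    using that by (auto simp: ln_mult ln_div)
  define A where "A = logmean a0 a1"
  define C where "C = logmean c0 c1"
  have A: "A > 0" "A * (ln a1 - ln a0) = a1 - a0" using assms logmean_pos logmean_prop A_def by auto
  have C: "C > 0" "C * (ln c1 - ln c0) = c1 - c0" using assms logmean_pos logmean_prop C_def by auto
  have la: "ln a1 = ln a0 + (a1 - a0) / A" using A by (simp add: field_simps)
  have lc: "ln c1 = ln c0 + (c1 - c0) / C" using C by (simp add: field_simps)
  have ab: "(a0 + a1)/2 \<noteq> 0" using assms by simp
  have g: "g - 1 \<noteq> 0" "1 - g \<noteq> 0" using assms by auto
  have e: "ent_vars g (a*c) (b/a) (c/a) =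
     ((g - (1-g) * ln c + (1+g) * ln a)/(g-1) - b^2/2, a*b, - (a*a))" if "a > 0" "c > 0" for a b c :: real
    using that by (simp add: ent_vars_def phys_entropy_def l algebra_simps power2_eq_square)
  define K where "K = (1+g)/(1-g)"
  have d1: "(g - (1-g) * ln c1 + (1+g) * ln a1)/(g-1) - b1^2/2 - ((g - (1-g) * ln c0 + (1+g) * ln a0)/(g-1) - b0^2/2)
     = (ln c1 - ln c0) - K * (ln a1 - ln a0) - (b1*b1 - b0*b0)/2"
  proof -
    have Kn: "K = - ((1+g)/(g-1))"
    proof -
      have "K = (1+g)/(-(g-1))" unfolding K_def by simp
      then show ?thesis by (simp only: divide_minus_right)
    qed
    have st: "(g - (1-g)*x + (1+g)*y)/(g-1) = g/(g-1) + x + (1+g)/(g-1)*y" for x y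
    proof -
      have h1: "g - (1-g)*x + (1+g)*y = g + (g-1)*x + (1+g)*y" by (simp add: algebra_simps)
      have h2: "(g + (g-1)*x + (1+g)*y)/(g-1) = g/(g-1) + (g-1)*x/(g-1) + (1+g)*y/(g-1)"
        by (simp only: add_divide_distrib)
      have h3: "(g-1)*x/(g-1) = x" using g by simp
      show ?thesis unfolding h1 h2 h3 by simp
    qed
    define q where "q = (1+g)/(g-1)"
    show ?thesis unfolding st Kn q_def[symmetric] by (simp add: algebra_simps power2_eq_square diff_divide_distrib)
  qed
  have ab2: "a0 + a1 \<noteq> 0" using assms by simp
  show ?thesis
    unfolding e[OF assms(2,3)] e[OF assms(4,5)] ustar_def z[OF assms(2,3)] z[OF assms(4,5)]
      A_def[symmetric] C_def[symmetric] Let_def amean_def dot3_def diff3_def fst_conv snd_conv d1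
    K_def[symmetric]
    using alg[OF ab2 _ _ A(2) C(2), of K b1 b0] A C by simp
qed

lemma zrep:
  fixes a b c :: real assumes "a > 0" "c > 0"
  shows "zz1 (a*c) (c/a) = a" "zz3 (a*c) (c/a) = c" "zz2 (a*c) (b/a) (c/a) = b"
proof -
  have "(a*c)/(c/a) = a^2" "(a*c)*(c/a) = c^2" using assms by (auto simp: power2_eq_square)
  then show "zz1 (a*c) (c/a) = a" "zz3 (a*c) (c/a) = c" "zz2 (a*c) (b/a) (c/a) = b"
    using assms by (auto simp: zz1_def zz2_def zz3_def)
qed

lemma cons_abc:
  fixes g a b c :: real assumes "g > 1" "a > 0" "c > 0"
  shows "ustar g (a*c) (b/a) (c/a) (a*c) (b/a) (c/a) = cons_vars g (a*c) (b/a) (c/a)"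
proof -
  have g: "g - 1 \<noteq> 0" "1 - g \<noteq> 0" using assms by auto
  show ?thesis
    unfolding ustar_def zrep[OF assms(2,3)] logmean_def amean_def Let_def cons_vars_def
    using g assms(2,3) by (simp add: field_simps power2_eq_square)
qed

theorem mainTheorem1:
  fixes \<gamma> r0 v0 p0 r1 v1 p1 :: real
  assumes "\<gamma> > 1" and "r0 > 0" and "p0 > 0" and "r1 > 0" and "p1 > 0"
  shows "dot3 (diff3 (ent_vars \<gamma> r1 v1 p1) (ent_vars \<gamma> r0 v0 p0)) (ustar \<gamma> r0 v0 p0 r1 v1 p1) = r1 - r0
         \<and> ((r0, v0, p0) = (r1, v1, p1) \<longrightarrow> ustar \<gamma> r0 v0 p0 r1 v1 p1 = cons_vars \<gamma> r0 v0 p0)"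
proof
  note R0 = repr(1,2)[OF assms(2,3)] repr(3)[OF assms(2,3), of v0] repr(4,5)[OF assms(2,3)]
  note R1 = repr(1,2)[OF assms(4,5)] repr(3)[OF assms(4,5), of v1] repr(4,5)[OF assms(4,5)]
  show "dot3 (diff3 (ent_vars \<gamma> r1 v1 p1) (ent_vars \<gamma> r0 v0 p0)) (ustar \<gamma> r0 v0 p0 r1 v1 p1) = r1 - r0"
    using main_abc[OF assms(1) R0(4) R0(5) R1(4) R1(5), of "zz2 r1 v1 p1" "zz2 r0 v0 p0"]
    unfolding R0(1-3)[symmetric] R1(1-3)[symmetric] .
  show "(r0, v0, p0) = (r1, v1, p1) \<longrightarrow> ustar \<gamma> r0 v0 p0 r1 v1 p1 = cons_vars \<gamma> r0 v0 p0"
  proof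
    assume "(r0, v0, p0) = (r1, v1, p1)"
    then have e: "r1 = r0" "v1 = v0" "p1 = p0" by auto
    show "ustar \<gamma> r0 v0 p0 r1 v1 p1 = cons_vars \<gamma> r0 v0 p0"
      using cons_abc[OF assms(1) R0(4) R0(5), of "zz2 r0 v0 p0"]
      unfolding e R0(1-3)[symmetric] .
  qed
qed

end
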